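(* Let $n$ be a positive integer and let $\alpha,x,y$ be complex numbers. Then $$\frac{\alpha+n+1}2\sum_{k=0}^{n-1}\binom{\alpha+k}kE_k(x)E_{n-1-k}(y)=\sum_{k=0}^n\binom{\alpha+n+1}k\left((-1)^{n-k}B_k(x)-\binom{\alpha+n-k}{n-k}B_k(y)\right)E_{n-k}(x-y)$$ and $$(\alpha+n+2)\sum_{k=0}^n\binom{\alpha+k}kB_k(x)B_{n-k}(y)=(\alpha+1)\sum_{k=0}^n\binom{\alpha+n+2}k(-1)^{n-k}B_k(x)B_{n-k}(x-y)+\sum_{k=0}^n\binom{\alpha+n+2}k\binom{\alpha+n-k}{n-k}B_k(y)B_{n-k}(x-y).$$
   Context: Bernoulli numbers are defined by $B_0=1$ and $\sum_{k=0}^n\binom{n+1}kB_k=0$ for $n\ge1$; Euler numbers by $E_0=1$ and $\sum_{0\le k\le n,\,2\mid n-k}\binom nkE_k=0$ for $n\ge1$. The Bernoulli polynomials are $B_n(x)=\sum_{k=0}^n\binom nkB_kx^{n-k}$ and the Euler polynomials are $E_n(x)=\sum_{k=0}^n\binom nk\frac{E_k}{2^k}(x-\frac12)^{n-k}$. For complex $z$ and integer $k\ge0$, $\binom zk=z(z-1)\cdots(z-k+1)/k!$ (with $\binom z0=1$). *)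

theory Defs
  imports Complex_Main
begin

fun bern :: "nat \<Rightarrow> complex" where
  "bern n = (if n = 0 then 1
     else - (\<Sum>k<n. of_nat ((n + 1) choose k) * bern k) / of_nat (n + 1))"

fun euler_num :: "nat \<Rightarrow> complex" where
  "euler_num n = (if n = 0 then 1
     else - (\<Sum>k<n. if even (n - k) then of_nat (n choose k) * euler_num k else 0))"

definition bern_poly :: "nat \<Rightarrow> complex \<Rightarrow> complex" where
  "bern_poly n x = (\<Sum>k\<le>n. of_nat (n choose k) * bern k * x ^ (n - k))"

definition euler_poly :: "nat \<Rightarrow> complex \<Rightarrow> complex" where
  "euler_poly n x = (\<Sum>k\<le>n. of_nat (n choose k) * (euler_num k / 2 ^ k) * (x - 1/2) ^ (n - k))"

end

theory Submission
  imports Defs "HOL-Analysis.Analysis"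
begin

declare bern.simps[simp del] euler_num.simps[simp del]

lemma bern_0[simp]: "bern 0 = 1" by (simp add: bern.simps)
lemma bern_1: "bern 1 = -1/2" by (simp add: bern.simps)
lemma bern_Suc0[simp]: "bern (Suc 0) = -1/2" by (simp add: bern.simps)
lemma euler_num_0[simp]: "euler_num 0 = 1" by (simp add: euler_num.simps)

lemma bern_rec: "n > 0 \<Longrightarrow> (\<Sum>k<n. of_nat ((n + 1) choose k) * bern k) = - of_nat (n+1) * bern n"
  by (subst (2) bern.simps) (simp add: field_simps del: of_nat_Suc)

lemma bern_sum0: "n \<ge> 2 \<Longrightarrow> (\<Sum>k<n. of_nat (n choose k) * bern k) = 0"
proof -
  assume "n \<ge> 2"
  then obtain m where m: "n = Suc m" "m > 0" by (cases n) auto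
  have "(\<Sum>k<n. of_nat (n choose k) * bern k) = (\<Sum>k<m. of_nat ((m+1) choose k) * bern k) + of_nat (m+1) * bern m"
    using m by (simp add: lessThan_Suc)
  also have "\<dots> = 0" using bern_rec[OF m(2)] by (simp add: algebra_simps)
  finally show ?thesis .
qed

lemma bern_poly_0: "bern_poly n 0 = bern n"
proof -
  have "(\<Sum>k\<le>n. of_nat (n choose k) * bern k * (0::complex) ^ (n - k)) = (\<Sum>k\<le>n. if k = n then bern k else 0)"
    by (rule sum.cong) auto
  then show ?thesis unfolding bern_poly_def by simp
qed

lemma bern_poly_1: "bern_poly k 1 = bern k + (if k = 1 then 1 else 0)"
proof -
  have "bern_poly k 1 = (\<Sum>j\<le>k. of_nat (k choose j) * bern j)"
    unfolding bern_poly_def by simp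
  also have "\<dots> = (\<Sum>j<k. of_nat (k choose j) * bern j) + bern k"
    by (simp add: lessThan_Suc_atMost[symmetric])
  finally have *: "bern_poly k 1 = (\<Sum>j<k. of_nat (k choose j) * bern j) + bern k" .
  show ?thesis
  proof (cases "k \<ge> 2")
    case True then show ?thesis using * bern_sum0[OF True] by simp
  next
    case False
    then have "k = 0 \<or> k = 1" by auto
    then show ?thesis using * by (auto simp: bern_1)
  qed
qed

lemma sum_swap_tri: "(\<Sum>N\<le>(n::nat). \<Sum>k\<le>N. g N k) = (\<Sum>k\<le>n. \<Sum>N\<in>{k..n}. g N k)"
proof (induction n)
  case 0 then show ?case by simp
next
  case (Suc n)
  have "(\<Sum>k\<le>Suc n. \<Sum>N\<in>{k..Suc n}. g N k) = (\<Sum>k\<le>n. \<Sum>N\<in>{k..Suc n}. g N k) + g (Suc n) (Suc n)"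
    by simp
  also have "(\<Sum>k\<le>n. \<Sum>N\<in>{k..Suc n}. g N k) = (\<Sum>k\<le>n. (\<Sum>N\<in>{k..n}. g N k) + g (Suc n) k)"
    by (rule sum.cong) (auto simp: atLeastAtMostSuc_conv add.commute)
  finally show ?case using Suc by (simp add: sum.distrib)
qed

lemma binomial_transform:
  fixes f :: "nat \<Rightarrow> complex"
  shows "(\<Sum>N\<le>n. of_nat (n choose N) * (\<Sum>k\<le>N. of_nat (N choose k) * (-1)^(N-k) * f k)) = f n"
proof -
  have "(\<Sum>N\<le>n. of_nat (n choose N) * (\<Sum>k\<le>N. of_nat (N choose k) * (-1)^(N-k) * f k))
      = (\<Sum>N\<le>n. \<Sum>k\<le>N. of_nat (n choose N) * of_nat (N choose k) * (-1)^(N-k) * f k)"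
    by (simp add: sum_distrib_left mult.assoc)
  also have "\<dots> = (\<Sum>k\<le>n. \<Sum>N\<in>{k..n}. of_nat (n choose N) * of_nat (N choose k) * (-1)^(N-k) * f k)"
    by (rule sum_swap_tri)
  also have "\<dots> = (\<Sum>k\<le>n. if k = n then f k else 0)"
  proof (rule sum.cong)
    fix k assume k: "k \<in> {..n}"
    have "(\<Sum>N\<in>{k..n}. of_nat (n choose N) * of_nat (N choose k) * (-1)^(N-k) * f k)
        = (\<Sum>N\<in>{k..n}. of_nat (n choose k) * f k * ((-1)^(N-k) * of_nat ((n-k) choose (N-k))))"
    proof (rule sum.cong)
      fix N assume "N \<in> {k..n}"
      then have "(n choose N) * (N choose k) = (n choose k) * ((n - k) choose (N - k))"
        by (intro choose_mult) auto
      then have "(of_nat (n choose N) * of_nat (N choose k) :: complex) = of_nat (n choose k) * of_nat ((n - k) choose (N - k))"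
        by (metis of_nat_mult)
      then show "of_nat (n choose N) * of_nat (N choose k) * (-1)^(N-k) * f k
          = of_nat (n choose k) * f k * ((-1)^(N-k) * of_nat ((n-k) choose (N-k)))"
        by (simp add: algebra_simps)
    qed simp
    also have "\<dots> = of_nat (n choose k) * f k * (\<Sum>N\<in>{k..n}. (-1)^(N-k) * of_nat ((n-k) choose (N-k)))"
      by (simp add: sum_distrib_left)
    also have "(\<Sum>N\<in>{k..n}. (-1)^(N-k) * of_nat ((n-k) choose (N-k)) :: complex)
        = (\<Sum>i\<in>{0..n-k}. (-1)^i * of_nat ((n-k) choose i))"
    proof -
      have "(\<Sum>i\<in>{0..n-k}. (-1)^i * of_nat ((n-k) choose i) :: complex)
          = (\<Sum>N\<in>{0+k..(n-k)+k}. (-1)^(N-k) * of_nat ((n-k) choose (N-k)))"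
        by (subst sum.shift_bounds_cl_nat_ivl) simp
      then show ?thesis using k by simp
    qed
    also have "\<dots> = (if k = n then 1 else 0)"
    proof (cases "k = n")
      case True then show ?thesis by simp
    next
      case False
      then have "n - k > 0" using k by auto
      from choose_alternating_sum[OF this] show ?thesis using False by (simp add: atLeast0AtMost)
    qed
    finally show "(\<Sum>N\<in>{k..n}. of_nat (n choose N) * of_nat (N choose k) * (-1)^(N-k) * f k) = (if k = n then f k else 0)"
      by simp
  qed simp
  also have "\<dots> = f n" by simp
  finally show ?thesis .
qed

lemma bern_neg_sum: "(\<Sum>k<n. of_nat (n choose k) * ((-1)^k * bern k)) = of_nat n"
proof -
  define f where "f k = (-1)^k * bern k" for k
  have inner: "(\<Sum>k\<le>N. of_nat (N choose k) * (-1)^(N-k) * f k) = f N - (if N = 1 then 1 else 0)" for N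
  proof -
    have "(\<Sum>k\<le>N. of_nat (N choose k) * (-1)^(N-k) * f k) = (\<Sum>k\<le>N. (-1)^N * (of_nat (N choose k) * bern k))"
    proof (rule sum.cong)
      fix k assume "k \<in> {..N}"
      then have "(-1::complex)^(N-k) * (-1)^k = (-1)^N" by (simp add: power_add[symmetric])
      then show "of_nat (N choose k) * (-1)^(N-k) * f k = (-1)^N * (of_nat (N choose k) * bern k)"
        unfolding f_def by (metis mult.assoc mult.left_commute)
    qed simp
    also have "\<dots> = (-1)^N * bern_poly N 1"
      by (simp add: bern_poly_def sum_distrib_left)
    also have "\<dots> = f N - (if N = 1 then 1 else 0)"
      by (simp add: bern_poly_1 f_def bern_1)
    finally show ?thesis .
  qed
  have "f n = (\<Sum>N\<le>n. of_nat (n choose N) * (f N - (if N = 1 then 1 else 0)))"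
    using binomial_transform[of n f] by (simp add: inner)
  also have "\<dots> = (\<Sum>N\<le>n. of_nat (n choose N) * f N) - (\<Sum>N\<le>n. if N = 1 then of_nat (n choose N) else 0)"
    by (subst sum_subtractf[symmetric]) (rule sum.cong, auto simp: algebra_simps)
  also have "(\<Sum>N\<le>n. if N = 1 then of_nat (n choose N) else 0) = (of_nat n :: complex)"
    by (cases n) (simp_all add: sum.delta)
  also have "(\<Sum>N\<le>n. of_nat (n choose N) * f N) = (\<Sum>N<n. of_nat (n choose N) * f N) + f n"
    by (simp add: lessThan_Suc_atMost[symmetric])
  finally show ?thesis unfolding f_def by simp
qed

lemma bern_refl: "(-1)^n * bern n = bern n + (if n = 1 then 1 else 0)"
proof (induction n rule: less_induct)
  case (less n)
  show ?case
  proof (cases "n \<ge> 2")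
    case False
    then have "n = 0 \<or> n = 1" by auto
    then show ?thesis by (auto simp: bern_1)
  next
    case True
    have "of_nat (n+1) = (\<Sum>k<n+1. of_nat ((n+1) choose k) * ((-1)^k * bern k) :: complex)"
      by (rule bern_neg_sum[symmetric])
    also have "\<dots> = (\<Sum>k<n. of_nat ((n+1) choose k) * ((-1)^k * bern k)) + of_nat (n+1) * ((-1)^n * bern n)"
      by simp
    also have "(\<Sum>k<n. of_nat ((n+1) choose k) * ((-1)^k * bern k))
       = (\<Sum>k<n. of_nat ((n+1) choose k) * bern k + (if k = 1 then of_nat ((n+1) choose k) else 0))"
    proof (rule sum.cong)
      fix k assume "k \<in> {..<n}"
      then have e: "(-1)^k * bern k = bern k + (if k = 1 then 1 else 0)" using less.IH by simp
      show "of_nat ((n+1) choose k) * ((-1)^k * bern k)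
         = of_nat ((n+1) choose k) * bern k + (if k = 1 then of_nat ((n+1) choose k) else 0)"
        by (subst e) (simp add: distrib_left)
    qed simp
    also have "\<dots> = (\<Sum>k<n. of_nat ((n+1) choose k) * bern k) + of_nat (n+1)"
      using True by (simp add: sum.distrib sum.delta)
    also have "\<dots> = - of_nat (n+1) * bern n + of_nat (n+1)"
      using True by (subst bern_rec) auto
    finally have "of_nat (n+1) * ((-1)^n * bern n) = of_nat (n+1) * (bern n :: complex)"
      by (simp add: algebra_simps)
    then show ?thesis using True by (simp del: of_nat_Suc)
  qed
qed

lemma euler_num_odd: "odd n \<Longrightarrow> euler_num n = 0"
proof (induction n rule: less_induct)
  case (less n)
  have "euler_num n = - (\<Sum>k<n. if even (n - k) then of_nat (n choose k) * euler_num k else 0)"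
    using less.prems by (subst euler_num.simps) (simp add: odd_pos)
  also have "(\<Sum>k<n. if even (n - k) then of_nat (n choose k) * euler_num k else 0) = 0"
  proof (rule sum.neutral, intro ballI)
    fix k assume k: "k \<in> {..<n}"
    show "(if even (n - k) then of_nat (n choose k) * euler_num k else 0) = 0"
    proof (cases "even (n - k)")
      case True
      then have "odd k" using less.prems k by auto
      then show ?thesis using less.IH k by auto
    qed simp
  qed
  finally show ?case by simp
qed

lemma euler_rec: "n > 0 \<Longrightarrow> (\<Sum>k\<le>n. if even (n - k) then of_nat (n choose k) * euler_num k else 0) = 0"
proof -
  assume n: "n > 0"
  have "(\<Sum>k\<le>n. if even (n - k) then of_nat (n choose k) * euler_num k else 0)
      = (\<Sum>k<n. if even (n - k) then of_nat (n choose k) * euler_num k else 0) + euler_num n"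
    by (simp add: lessThan_Suc_atMost[symmetric])
  also have "euler_num n = - (\<Sum>k<n. if even (n - k) then of_nat (n choose k) * euler_num k else 0)"
    using n by (subst euler_num.simps) simp
  finally show ?thesis by simp
qed

lemma euler_poly_0_1: "euler_poly k 0 = (-1)^k * euler_poly k 1"
proof -
  have "euler_poly k 0 = (\<Sum>j\<le>k. (-1)^k * (of_nat (k choose j) * (euler_num j / 2 ^ j) * (1 - 1/2) ^ (k - j)))"
    unfolding euler_poly_def
  proof (rule sum.cong)
    fix j assume j: "j \<in> {..k}"
    show "of_nat (k choose j) * (euler_num j / 2 ^ j) * (0 - 1 / 2) ^ (k - j) =
          (-1)^k * (of_nat (k choose j) * (euler_num j / 2 ^ j) * (1 - 1/2) ^ (k - j))"
    proof (cases "even j")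
      case True
      have a: "(0 - 1/2 :: complex) ^ (k - j) = (-1)^(k-j) * (1 - 1/2) ^ (k - j)"
        by (simp add: power_mult_distrib[symmetric])
      have b: "(-1::complex)^(k-j) = (-1)^k"
      proof -
        have "(-1::complex)^k = (-1)^(k-j) * (-1)^j" using j by (simp add: power_add[symmetric])
        then show ?thesis using True by simp
      qed
      show ?thesis unfolding a b by (simp only: mult_ac)
    next
      case False then show ?thesis by (simp add: euler_num_odd)
    qed
  qed simp
  then show ?thesis unfolding euler_poly_def by (simp add: sum_distrib_left)
qed

lemma euler_poly_sum01: "k > 0 \<Longrightarrow> euler_poly k 0 + euler_poly k 1 = 0"
proof -
  assume k: "k > 0"
  have "euler_poly k 0 + euler_poly k 1 = (\<Sum>j\<le>k. 2 / 2^k * (if even (k - j) then of_nat (k choose j) * euler_num j else 0))"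
    unfolding euler_poly_def sum.distrib[symmetric]
  proof (rule sum.cong)
    fix j assume j: "j \<in> {..k}"
    have p: "(2::complex) ^ k = 2 ^ j * 2 ^ (k - j)" using j by (simp add: power_add[symmetric])
    have e: "of_nat (k choose j) * (euler_num j / 2 ^ j) * (0 - 1 / 2) ^ (k - j) +
          of_nat (k choose j) * (euler_num j / 2 ^ j) * (1 - 1 / 2) ^ (k - j)
        = of_nat (k choose j) * (euler_num j / 2 ^ j) * ((- (1 / 2)) ^ (k - j) + (1 / 2) ^ (k - j))"
      by (simp add: distrib_left)
    show "of_nat (k choose j) * (euler_num j / 2 ^ j) * (0 - 1 / 2) ^ (k - j) +
          of_nat (k choose j) * (euler_num j / 2 ^ j) * (1 - 1 / 2) ^ (k - j) =
          2 / 2 ^ k * (if even (k - j) then of_nat (k choose j) * euler_num j else 0)"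
    proof (cases "even (k - j)")
      case True
      then have "(- (1 / 2 :: complex)) ^ (k - j) + (1 / 2) ^ (k - j) = 2 / 2 ^ (k - j)"
        by (simp add: power_divide)
      then show ?thesis unfolding e p using True by simp
    next
      case False
      then have "(- (1 / 2 :: complex)) ^ (k - j) + (1 / 2) ^ (k - j) = 0"
        by simp
      then show ?thesis unfolding e using False by simp
    qed
  qed simp
  also have "\<dots> = 2 / 2^k * (\<Sum>j\<le>k. if even (k - j) then of_nat (k choose j) * euler_num j else 0)"
    by (simp add: sum_distrib_left)
  also have "\<dots> = 0" using euler_rec[OF k] by simp
  finally show ?thesis .
qed

lemma euler_poly_even0: "k > 0 \<Longrightarrow> (1 + (-1)^k) * euler_poly k 0 = 0"
proof -
  assume k: "k > 0"
  have "euler_poly k 1 = (-1)^k * euler_poly k 0"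
    using euler_poly_0_1[of k] by (simp add: power_mult_distrib[symmetric] mult.assoc[symmetric])
  with euler_poly_sum01[OF k] show ?thesis by (simp add: algebra_simps)
qed

lemma euler_poly_zero [simp]: "euler_poly 0 x = 1"
  by (simp add: euler_poly_def)

lemma bern_poly_zero [simp]: "bern_poly 0 x = 1"
  by (simp add: bern_poly_def)

lemma appell_deriv:
  fixes a :: "nat \<Rightarrow> complex"
  shows "((\<lambda>x. \<Sum>k\<le>n. of_nat (n choose k) * a k * (x - z)^(n-k)) has_field_derivative
          of_nat n * (\<Sum>k\<le>n-1. of_nat ((n-1) choose k) * a k * (x - z)^(n-1-k))) (at x)"
proof -
  have d: "((\<lambda>x. \<Sum>k\<le>n. of_nat (n choose k) * a k * (x - z)^(n-k)) has_field_derivative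
          (\<Sum>k\<le>n. of_nat (n choose k) * a k * (of_nat (n-k) * (x - z)^(n-k-1)))) (at x)"
    by ((rule derivative_eq_intros refl | simp)+, simp add: mult_ac)
  show ?thesis
  proof (cases n)
    case 0 then show ?thesis using d by simp
  next
    case (Suc m)
    have "(\<Sum>k\<le>n. of_nat (n choose k) * a k * (of_nat (n-k) * (x - z)^(n-k-1)))
        = (\<Sum>k\<le>m. of_nat (n choose k) * a k * (of_nat (n-k) * (x - z)^(n-k-1)))"
      using Suc by simp
    also have "\<dots> = (\<Sum>k\<le>m. of_nat n * (of_nat (m choose k) * a k * (x - z)^(m-k)))"
    proof (rule sum.cong)
      fix k assume k: "k \<in> {..m}"
      have "(n - k) * (n choose k) = n * ((n - 1) choose k)" by (rule binomial_absorb_comp)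
      then have "(of_nat (n - k) * of_nat (n choose k) :: complex) = of_nat n * of_nat (m choose k)"
        using Suc by (metis diff_Suc_1 of_nat_mult)
      moreover have "n - k - 1 = m - k" using Suc by simp
      ultimately show "of_nat (n choose k) * a k * (of_nat (n-k) * (x - z)^(n-k-1))
         = of_nat n * (of_nat (m choose k) * a k * (x - z)^(m-k))"
        by (simp add: algebra_simps)
    qed simp
    finally show ?thesis using d Suc by (simp add: sum_distrib_left)
  qed
qed

lemma bern_poly_deriv: "(bern_poly n has_field_derivative of_nat n * bern_poly (n-1) x) (at x)"
proof -
  have e: "bern_poly m = (\<lambda>x. \<Sum>k\<le>m. of_nat (m choose k) * bern k * (x - 0)^(m-k))" for m
    by (simp add: bern_poly_def[abs_def])
  show ?thesis unfolding e by (rule appell_deriv)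
qed

lemma euler_poly_deriv: "(euler_poly n has_field_derivative of_nat n * euler_poly (n-1) x) (at x)"
proof -
  have e: "euler_poly m = (\<lambda>x. \<Sum>k\<le>m. of_nat (m choose k) * (euler_num k / 2^k) * (x - 1/2)^(m-k))" for m
    by (simp add: euler_poly_def[abs_def])
  show ?thesis unfolding e by (rule appell_deriv)
qed

lemma bern_poly_deriv_chain:
  "(f has_field_derivative f') (at x) \<Longrightarrow>
   ((\<lambda>x. bern_poly n (f x)) has_field_derivative (of_nat n * bern_poly (n-1) (f x) * f')) (at x)"
  by (rule DERIV_chain2[OF bern_poly_deriv])

lemma euler_poly_deriv_chain:
  "(f has_field_derivative f') (at x) \<Longrightarrow>
   ((\<lambda>x. euler_poly n (f x)) has_field_derivative (of_nat n * euler_poly (n-1) (f x) * f')) (at x)"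
  by (rule DERIV_chain2[OF euler_poly_deriv])

lemma conv_deriv:
  fixes P Q :: "nat \<Rightarrow> complex \<Rightarrow> complex" and c :: "nat \<Rightarrow> complex"
  assumes P: "\<And>k. (P k has_field_derivative of_nat k * P (k-1) t) (at t)"
      and Q: "\<And>k. (Q k has_field_derivative of_nat k * Q (k-1) t) (at t)"
  shows "((\<lambda>s. \<Sum>k\<le>n. c k * P k s * Q (n - k) s) has_field_derivative
          (\<Sum>j<n. (of_nat (Suc j) * c (Suc j) + of_nat (n - j) * c j) * P j t * Q (n - 1 - j) t)) (at t)"
proof -
  have d: "((\<lambda>s. \<Sum>k\<le>n. c k * P k s * Q (n - k) s) has_field_derivative
          (\<Sum>k\<le>n. c k * (of_nat k * P (k-1) t) * Q (n - k) t + c k * P k t * (of_nat (n-k) * Q (n-k-1) t))) (at t)"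
  proof (rule DERIV_sum)
    fix k
    have "((\<lambda>s. c k * P k s * Q (n - k) s) has_field_derivative
          (c k * P k t) * (of_nat (n-k) * Q (n-k-1) t) + (c k * (of_nat k * P (k-1) t)) * Q (n - k) t) (at t)"
      by (rule DERIV_mult'[OF DERIV_cmult[OF P] Q])
    then show "((\<lambda>s. c k * P k s * Q (n - k) s) has_field_derivative
          c k * (of_nat k * P (k-1) t) * Q (n - k) t + c k * P k t * (of_nat (n-k) * Q (n-k-1) t)) (at t)"
      by (rule DERIV_cong) (simp add: algebra_simps)
  qed
  show ?thesis
  proof (cases n)
    case 0 then show ?thesis using d by simp
  next
    case (Suc m)
    have s1: "(\<Sum>k\<le>n. c k * (of_nat k * P (k-1) t) * Q (n - k) t)
       = (\<Sum>j<n. of_nat (Suc j) * c (Suc j) * P j t * Q (n - 1 - j) t)"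
      unfolding Suc sum.atMost_shift by (simp add: algebra_simps)
    have s2: "(\<Sum>k\<le>n. c k * P k t * (of_nat (n-k) * Q (n-k-1) t))
       = (\<Sum>j<n. of_nat (n - j) * c j * P j t * Q (n - 1 - j) t)"
      unfolding Suc by (simp add: lessThan_Suc_atMost algebra_simps)
    show ?thesis using d unfolding sum.distrib s1 s2 by (simp add: algebra_simps sum.distrib[symmetric])
  qed
qed

lemma conv_deriv1:
  fixes P :: "nat \<Rightarrow> complex \<Rightarrow> complex" and R :: "nat \<Rightarrow> complex" and c :: "nat \<Rightarrow> complex"
  assumes P: "\<And>k. (P k has_field_derivative of_nat k * P (k-1) t) (at t)"
  shows "((\<lambda>s. \<Sum>k\<le>n. c k * P k s * R (n - k)) has_field_derivative
          (\<Sum>j<n. of_nat (Suc j) * c (Suc j) * P j t * R (n - 1 - j))) (at t)"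
proof -
  have d: "((\<lambda>s. \<Sum>k\<le>n. c k * P k s * R (n - k)) has_field_derivative
          (\<Sum>k\<le>n. c k * (of_nat k * P (k-1) t) * R (n - k))) (at t)"
    by (intro DERIV_sum DERIV_cmult DERIV_cmult_right P)
  show ?thesis
  proof (cases n)
    case 0 then show ?thesis using d by simp
  next
    case (Suc m)
    have s1: "(\<Sum>k\<le>n. c k * (of_nat k * P (k-1) t) * R (n - k))
       = (\<Sum>j<n. of_nat (Suc j) * c (Suc j) * P j t * R (n - 1 - j))"
      unfolding Suc sum.atMost_shift by (simp add: algebra_simps)
    show ?thesis using d unfolding s1 .
  qed
qed

lemma conv_deriv2:
  fixes Q :: "nat \<Rightarrow> complex \<Rightarrow> complex" and R :: "nat \<Rightarrow> complex" and c :: "nat \<Rightarrow> complex"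
  assumes Q: "\<And>k. (Q k has_field_derivative of_nat k * Q (k-1) t) (at t)"
  shows "((\<lambda>s. \<Sum>k\<le>n. c k * R k * Q (n - k) s) has_field_derivative
          (\<Sum>j<n. of_nat (n - j) * c j * R j * Q (n - 1 - j) t)) (at t)"
proof -
  have d: "((\<lambda>s. \<Sum>k\<le>n. c k * R k * Q (n - k) s) has_field_derivative
          (\<Sum>k\<le>n. c k * R k * (of_nat (n-k) * Q (n-k-1) t))) (at t)"
    by (intro DERIV_sum DERIV_cmult Q)
  show ?thesis
  proof (cases n)
    case 0 then show ?thesis using d by simp
  next
    case (Suc m)
    have s2: "(\<Sum>k\<le>n. c k * R k * (of_nat (n-k) * Q (n-k-1) t))
       = (\<Sum>j<n. of_nat (n - j) * c j * R j * Q (n - 1 - j) t)"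
      unfolding Suc by (simp add: lessThan_Suc_atMost algebra_simps)
    show ?thesis using d unfolding s2 .
  qed
qed

lemma gI1: "of_nat (Suc j) * ((\<alpha> + of_nat (Suc j)) gchoose Suc j) = (\<alpha> + 1) * ((\<alpha> + 1 + of_nat j) gchoose j)"
  for \<alpha> :: complex
proof -
  have "(\<alpha> + of_nat (Suc j)) * ((\<alpha> + of_nat (Suc j)) gchoose j) = of_nat j * ((\<alpha> + of_nat (Suc j)) gchoose j) + of_nat (Suc j) * ((\<alpha> + of_nat (Suc j)) gchoose (Suc j))"
    by (rule gbinomial_mult_1)
  moreover have "\<alpha> + of_nat (Suc j) = \<alpha> + 1 + of_nat j" by simp
  ultimately show ?thesis by (simp add: algebra_simps)
qed

lemma gI2: "of_nat (Suc j) * ((a::complex) gchoose Suc j) = (a - of_nat j) * (a gchoose j)"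
proof -
  have "a * (a gchoose j) = of_nat j * (a gchoose j) + of_nat (Suc j) * (a gchoose (Suc j))"
    by (rule gbinomial_mult_1)
  then show ?thesis by (simp add: algebra_simps)
qed

lemma gI3: "of_nat (Suc j) * ((\<alpha> + of_nat (Suc j)) gchoose Suc j) = (\<alpha> + of_nat j + 1) * ((\<alpha> + of_nat j) gchoose j)"
  for \<alpha> :: complex
proof -
  have h: "\<alpha> + of_nat (Suc j) = \<alpha> + of_nat j + 1" by simp
  show ?thesis unfolding h by (rule Suc_times_gbinomial)
qed

lemma gI4: "of_nat (Suc j) * ((a::complex) gchoose Suc j) = a * ((a - 1) gchoose j)"
  by (rule gbinomial_absorption)

lemma bern_shift_deriv: "((\<lambda>s. bern_poly k (s - y)) has_field_derivative of_nat k * bern_poly (k-1) (t - y)) (at t)"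
proof -
  have "((\<lambda>s. s - y) has_field_derivative 1) (at t)" by (auto intro!: derivative_eq_intros)
  from bern_poly_deriv_chain[OF this, of k] show ?thesis by simp
qed

lemma euler_shift_deriv: "((\<lambda>s. euler_poly k (s - y)) has_field_derivative of_nat k * euler_poly (k-1) (t - y)) (at t)"
proof -
  have "((\<lambda>s. s - y) has_field_derivative 1) (at t)" by (auto intro!: derivative_eq_intros)
  from euler_poly_deriv_chain[OF this, of k] show ?thesis by simp
qed

definition L2 :: "nat \<Rightarrow> complex \<Rightarrow> complex \<Rightarrow> complex \<Rightarrow> complex" where
  "L2 n \<alpha> x y = (\<alpha> + of_nat n + 2) * (\<Sum>k\<le>n. ((\<alpha> + of_nat k) gchoose k) * bern_poly k x * bern_poly (n - k) y)"
definition U2 :: "nat \<Rightarrow> complex \<Rightarrow> complex \<Rightarrow> complex \<Rightarrow> complex" where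
  "U2 n \<alpha> x y = (\<Sum>k\<le>n. ((\<alpha> + of_nat n + 2) gchoose k) * (-1) ^ (n - k) * bern_poly k x * bern_poly (n - k) (x - y))"
definition V2 :: "nat \<Rightarrow> complex \<Rightarrow> complex \<Rightarrow> complex \<Rightarrow> complex" where
  "V2 n \<alpha> x y = (\<Sum>k\<le>n. ((\<alpha> + of_nat n + 2) gchoose k) * ((\<alpha> + of_nat (n - k)) gchoose (n - k)) * bern_poly k y * bern_poly (n - k) (x - y))"
definition D2 :: "nat \<Rightarrow> complex \<Rightarrow> complex \<Rightarrow> complex \<Rightarrow> complex" where
  "D2 n \<alpha> x y = L2 n \<alpha> x y - ((\<alpha> + 1) * U2 n \<alpha> x y + V2 n \<alpha> x y)"

lemma L2_dx: "((\<lambda>x. L2 (Suc n) \<alpha> x y) has_field_derivative (\<alpha> + 1) * L2 n (\<alpha> + 1) x y) (at x)"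
proof -
  have d: "((\<lambda>s. \<Sum>k\<le>Suc n. ((\<alpha> + of_nat k) gchoose k) * bern_poly k s * bern_poly (Suc n - k) y) has_field_derivative
      (\<Sum>j<Suc n. of_nat (Suc j) * ((\<alpha> + of_nat (Suc j)) gchoose (Suc j)) * bern_poly j x * bern_poly (Suc n - 1 - j) y)) (at x)"
    by (rule conv_deriv1[where P = bern_poly and R = "\<lambda>k. bern_poly k y"], rule bern_poly_deriv)
  have e: "(\<Sum>j<Suc n. of_nat (Suc j) * ((\<alpha> + of_nat (Suc j)) gchoose (Suc j)) * bern_poly j x * bern_poly (Suc n - 1 - j) y)
      = (\<alpha> + 1) * (\<Sum>k\<le>n. ((\<alpha> + 1 + of_nat k) gchoose k) * bern_poly k x * bern_poly (n - k) y)"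
    unfolding lessThan_Suc_atMost sum_distrib_left
    by (rule sum.cong) (simp, simp only: gI1 mult.assoc diff_Suc_1)
  have f: "\<alpha> + of_nat (Suc n) + 2 = \<alpha> + 1 + of_nat n + 2" by simp
  show ?thesis unfolding L2_def
    using DERIV_cmult[OF d, of "\<alpha> + of_nat (Suc n) + 2"] unfolding e f by (simp add: algebra_simps)
qed

lemma U2_dx: "((\<lambda>x. U2 (Suc n) \<alpha> x y) has_field_derivative (\<alpha> + 2) * U2 n (\<alpha> + 1) x y) (at x)"
proof -
  define N where "N = \<alpha> + of_nat (Suc n) + 2"
  have d: "((\<lambda>s. \<Sum>k\<le>Suc n. ((N gchoose k) * (-1) ^ (Suc n - k)) * bern_poly k s * bern_poly (Suc n - k) (s - y)) has_field_derivative
      (\<Sum>j<Suc n. (of_nat (Suc j) * ((N gchoose (Suc j)) * (-1) ^ (Suc n - Suc j)) + of_nat (Suc n - j) * ((N gchoose j) * (-1) ^ (Suc n - j)))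
          * bern_poly j x * bern_poly (Suc n - 1 - j) (x - y))) (at x)"
    by (rule conv_deriv[where P = bern_poly and Q = "\<lambda>k s. bern_poly k (s - y)"], rule bern_poly_deriv, rule bern_shift_deriv)
  have e: "(\<Sum>j<Suc n. (of_nat (Suc j) * ((N gchoose (Suc j)) * (-1) ^ (Suc n - Suc j)) + of_nat (Suc n - j) * ((N gchoose j) * (-1) ^ (Suc n - j)))
          * bern_poly j x * bern_poly (Suc n - 1 - j) (x - y))
      = (\<alpha> + 2) * (\<Sum>k\<le>n. (N gchoose k) * (-1) ^ (n - k) * bern_poly k x * bern_poly (n - k) (x - y))"
    unfolding lessThan_Suc_atMost sum_distrib_left
  proof (rule sum.cong)
    fix j assume j: "j \<in> {..n}"
    have s1: "(-1::complex) ^ (Suc n - j) = - ((-1) ^ (n - j))" using j by (simp add: Suc_diff_le)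
    have s2: "of_nat (Suc n - j) = (of_nat n + 1 - of_nat j :: complex)" using j by (simp add: Suc_diff_le of_nat_diff)
    have F: "of_nat (Suc j) * (N gchoose (Suc j)) + - (of_nat (Suc n - j) * (N gchoose j)) = (\<alpha> + 2) * (N gchoose j)"
      unfolding gI2 s2 N_def by (simp add: algebra_simps)
    have G: "of_nat (Suc j) * ((N gchoose (Suc j)) * (-1) ^ (n - j)) + of_nat (Suc n - j) * ((N gchoose j) * - ((-1) ^ (n - j)))
       = (\<alpha> + 2) * ((N gchoose j) * (-1) ^ (n - j))"
    proof -
      have "of_nat (Suc j) * ((N gchoose (Suc j)) * (-1) ^ (n - j)) + of_nat (Suc n - j) * ((N gchoose j) * - ((-1) ^ (n - j)))
          = (of_nat (Suc j) * (N gchoose (Suc j)) + - (of_nat (Suc n - j) * (N gchoose j))) * (-1) ^ (n - j)"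
        by (simp add: algebra_simps)
      also have "\<dots> = (\<alpha> + 2) * ((N gchoose j) * (-1) ^ (n - j))" unfolding F by (simp add: mult.assoc)
      finally show ?thesis .
    qed
    show "(of_nat (Suc j) * ((N gchoose (Suc j)) * (-1) ^ (Suc n - Suc j)) + of_nat (Suc n - j) * ((N gchoose j) * (-1) ^ (Suc n - j)))
          * bern_poly j x * bern_poly (Suc n - 1 - j) (x - y)
        = (\<alpha> + 2) * ((N gchoose j) * (-1) ^ (n - j) * bern_poly j x * bern_poly (n - j) (x - y))"
      by (simp only: s1 diff_Suc_Suc diff_Suc_1 G mult.assoc)
  qed simp
  have f: "N = \<alpha> + 1 + of_nat n + 2" unfolding N_def by simp
  show ?thesis unfolding U2_def N_def[symmetric] f[symmetric]
    by (rule d[unfolded e])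
qed


lemma V2_dx: "((\<lambda>x. V2 (Suc n) \<alpha> x y) has_field_derivative (\<alpha> + 1) * V2 n (\<alpha> + 1) x y) (at x)"
proof -
  define N where "N = \<alpha> + of_nat (Suc n) + 2"
  have d: "((\<lambda>s. \<Sum>k\<le>Suc n. ((N gchoose k) * ((\<alpha> + of_nat (Suc n - k)) gchoose (Suc n - k))) * bern_poly k y * bern_poly (Suc n - k) (s - y)) has_field_derivative
      (\<Sum>j<Suc n. of_nat (Suc n - j) * ((N gchoose j) * ((\<alpha> + of_nat (Suc n - j)) gchoose (Suc n - j))) * bern_poly j y * bern_poly (Suc n - 1 - j) (x - y))) (at x)"
    by (rule conv_deriv2[where R = "\<lambda>k. bern_poly k y" and Q = "\<lambda>k s. bern_poly k (s - y)"], rule bern_shift_deriv)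
  have e: "(\<Sum>j<Suc n. of_nat (Suc n - j) * ((N gchoose j) * ((\<alpha> + of_nat (Suc n - j)) gchoose (Suc n - j))) * bern_poly j y * bern_poly (Suc n - 1 - j) (x - y))
      = (\<alpha> + 1) * (\<Sum>k\<le>n. (N gchoose k) * ((\<alpha> + 1 + of_nat (n - k)) gchoose (n - k)) * bern_poly k y * bern_poly (n - k) (x - y))"
    unfolding lessThan_Suc_atMost sum_distrib_left
  proof (rule sum.cong)
    fix j assume j: "j \<in> {..n}"
    have sd: "Suc n - j = Suc (n - j)" using j by (simp add: Suc_diff_le)
    have "of_nat (Suc n - j) * ((N gchoose j) * ((\<alpha> + of_nat (Suc n - j)) gchoose (Suc n - j)))
        = (N gchoose j) * (of_nat (Suc (n - j)) * ((\<alpha> + of_nat (Suc (n - j))) gchoose (Suc (n - j))))"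
      unfolding sd by (simp only: mult_ac)
    also have "\<dots> = (\<alpha> + 1) * ((N gchoose j) * ((\<alpha> + 1 + of_nat (n - j)) gchoose (n - j)))"
      unfolding gI1 by (simp only: mult_ac)
    finally have c: "of_nat (Suc n - j) * ((N gchoose j) * ((\<alpha> + of_nat (Suc n - j)) gchoose (Suc n - j)))
        = (\<alpha> + 1) * ((N gchoose j) * ((\<alpha> + 1 + of_nat (n - j)) gchoose (n - j)))" .
    show "of_nat (Suc n - j) * ((N gchoose j) * ((\<alpha> + of_nat (Suc n - j)) gchoose (Suc n - j))) * bern_poly j y * bern_poly (Suc n - 1 - j) (x - y)
        = (\<alpha> + 1) * ((N gchoose j) * ((\<alpha> + 1 + of_nat (n - j)) gchoose (n - j)) * bern_poly j y * bern_poly (n - j) (x - y))"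
      unfolding c diff_Suc_1 by (simp only: mult.assoc)
  qed simp
  have f: "N = \<alpha> + 1 + of_nat n + 2" unfolding N_def by simp
  show ?thesis unfolding V2_def N_def[symmetric] f[symmetric]
    by (rule d[unfolded e])
qed

lemma D2_dx: "((\<lambda>x. D2 (Suc n) \<alpha> x y) has_field_derivative (\<alpha> + 1) * D2 n (\<alpha> + 1) x y) (at x)"
proof -
  have "((\<lambda>x. D2 (Suc n) \<alpha> x y) has_field_derivative
     (\<alpha> + 1) * L2 n (\<alpha> + 1) x y - ((\<alpha> + 1) * ((\<alpha> + 2) * U2 n (\<alpha> + 1) x y) + (\<alpha> + 1) * V2 n (\<alpha> + 1) x y)) (at x)"
    unfolding D2_def by (intro DERIV_diff DERIV_add DERIV_cmult L2_dx U2_dx V2_dx)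
  then show ?thesis by (rule DERIV_cong) (simp add: D2_def algebra_simps)
qed


lemma L2_dt: "((\<lambda>t. L2 (Suc n) \<alpha> t t) has_field_derivative (\<alpha> + of_nat (Suc n) + 2) * L2 n \<alpha> t t) (at t)"
proof -
  have d: "((\<lambda>s. \<Sum>k\<le>Suc n. ((\<alpha> + of_nat k) gchoose k) * bern_poly k s * bern_poly (Suc n - k) s) has_field_derivative
      (\<Sum>j<Suc n. (of_nat (Suc j) * ((\<alpha> + of_nat (Suc j)) gchoose (Suc j)) + of_nat (Suc n - j) * ((\<alpha> + of_nat j) gchoose j))
         * bern_poly j t * bern_poly (Suc n - 1 - j) t)) (at t)"
    by (rule conv_deriv[where P = bern_poly and Q = bern_poly], rule bern_poly_deriv, rule bern_poly_deriv)
  have e: "(\<Sum>j<Suc n. (of_nat (Suc j) * ((\<alpha> + of_nat (Suc j)) gchoose (Suc j)) + of_nat (Suc n - j) * ((\<alpha> + of_nat j) gchoose j))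
         * bern_poly j t * bern_poly (Suc n - 1 - j) t)
      = (\<alpha> + of_nat n + 2) * (\<Sum>k\<le>n. ((\<alpha> + of_nat k) gchoose k) * bern_poly k t * bern_poly (n - k) t)"
    unfolding lessThan_Suc_atMost sum_distrib_left
  proof (rule sum.cong)
    fix j assume j: "j \<in> {..n}"
    have s2: "of_nat (Suc n - j) = (of_nat n + 1 - of_nat j :: complex)" using j by (simp add: Suc_diff_le of_nat_diff)
    have c: "of_nat (Suc j) * ((\<alpha> + of_nat (Suc j)) gchoose (Suc j)) + of_nat (Suc n - j) * ((\<alpha> + of_nat j) gchoose j)
        = (\<alpha> + of_nat n + 2) * ((\<alpha> + of_nat j) gchoose j)"
      unfolding gI3 s2 by (simp add: algebra_simps)
    show "(of_nat (Suc j) * ((\<alpha> + of_nat (Suc j)) gchoose (Suc j)) + of_nat (Suc n - j) * ((\<alpha> + of_nat j) gchoose j))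
         * bern_poly j t * bern_poly (Suc n - 1 - j) t
        = (\<alpha> + of_nat n + 2) * (((\<alpha> + of_nat j) gchoose j) * bern_poly j t * bern_poly (n - j) t)"
      unfolding c diff_Suc_1 by (simp only: mult.assoc)
  qed simp
  show ?thesis unfolding L2_def using DERIV_cmult[OF d[unfolded e], of "\<alpha> + of_nat (Suc n) + 2"] by simp
qed

lemma U2_diag: "U2 m \<alpha> t t = (\<Sum>k\<le>m. (((\<alpha> + of_nat m + 2) gchoose k) * (-1) ^ (m - k)) * bern_poly k t * bern_poly (m - k) 0)"
  unfolding U2_def by simp

lemma V2_diag: "V2 m \<alpha> t t = (\<Sum>k\<le>m. (((\<alpha> + of_nat m + 2) gchoose k) * ((\<alpha> + of_nat (m - k)) gchoose (m - k))) * bern_poly k t * bern_poly (m - k) 0)"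
  unfolding V2_def by simp

lemma U2_dt: "((\<lambda>t. U2 (Suc n) \<alpha> t t) has_field_derivative (\<alpha> + of_nat (Suc n) + 2) * U2 n \<alpha> t t) (at t)"
proof -
  define N where "N = \<alpha> + of_nat (Suc n) + 2"
  have d: "((\<lambda>s. \<Sum>k\<le>Suc n. ((N gchoose k) * (-1) ^ (Suc n - k)) * bern_poly k s * bern_poly (Suc n - k) 0) has_field_derivative
      (\<Sum>j<Suc n. of_nat (Suc j) * ((N gchoose (Suc j)) * (-1) ^ (Suc n - Suc j)) * bern_poly j t * bern_poly (Suc n - 1 - j) 0)) (at t)"
    by (rule conv_deriv1[where P = bern_poly and R = "\<lambda>k. bern_poly k 0"], rule bern_poly_deriv)
  have f: "N - 1 = \<alpha> + of_nat n + 2" unfolding N_def by simp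
  have e: "(\<Sum>j<Suc n. of_nat (Suc j) * ((N gchoose (Suc j)) * (-1) ^ (Suc n - Suc j)) * bern_poly j t * bern_poly (Suc n - 1 - j) 0)
      = N * (\<Sum>k\<le>n. (((\<alpha> + of_nat n + 2) gchoose k) * (-1) ^ (n - k)) * bern_poly k t * bern_poly (n - k) 0)"
    unfolding lessThan_Suc_atMost sum_distrib_left
  proof (rule sum.cong)
    fix j assume j: "j \<in> {..n}"
    have c: "of_nat (Suc j) * ((N gchoose (Suc j)) * (-1) ^ (Suc n - Suc j)) = N * (((\<alpha> + of_nat n + 2) gchoose j) * (-1) ^ (n - j))"
      unfolding mult.assoc[symmetric] gI4 f by simp
    show "of_nat (Suc j) * ((N gchoose (Suc j)) * (-1) ^ (Suc n - Suc j)) * bern_poly j t * bern_poly (Suc n - 1 - j) 0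
        = N * ((((\<alpha> + of_nat n + 2) gchoose j) * (-1) ^ (n - j)) * bern_poly j t * bern_poly (n - j) 0)"
      unfolding c diff_Suc_1 by (simp only: mult.assoc)
  qed simp
  show ?thesis unfolding U2_diag N_def[symmetric] using d[unfolded e] .
qed

lemma V2_dt: "((\<lambda>t. V2 (Suc n) \<alpha> t t) has_field_derivative (\<alpha> + of_nat (Suc n) + 2) * V2 n \<alpha> t t) (at t)"
proof -
  define N where "N = \<alpha> + of_nat (Suc n) + 2"
  have d: "((\<lambda>s. \<Sum>k\<le>Suc n. ((N gchoose k) * ((\<alpha> + of_nat (Suc n - k)) gchoose (Suc n - k))) * bern_poly k s * bern_poly (Suc n - k) 0) has_field_derivative
      (\<Sum>j<Suc n. of_nat (Suc j) * ((N gchoose (Suc j)) * ((\<alpha> + of_nat (Suc n - Suc j)) gchoose (Suc n - Suc j))) * bern_poly j t * bern_poly (Suc n - 1 - j) 0)) (at t)"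
    by (rule conv_deriv1[where P = bern_poly and R = "\<lambda>k. bern_poly k 0"], rule bern_poly_deriv)
  have f: "N - 1 = \<alpha> + of_nat n + 2" unfolding N_def by simp
  have e: "(\<Sum>j<Suc n. of_nat (Suc j) * ((N gchoose (Suc j)) * ((\<alpha> + of_nat (Suc n - Suc j)) gchoose (Suc n - Suc j))) * bern_poly j t * bern_poly (Suc n - 1 - j) 0)
      = N * (\<Sum>k\<le>n. (((\<alpha> + of_nat n + 2) gchoose k) * ((\<alpha> + of_nat (n - k)) gchoose (n - k))) * bern_poly k t * bern_poly (n - k) 0)"
    unfolding lessThan_Suc_atMost sum_distrib_left
  proof (rule sum.cong)
    fix j assume j: "j \<in> {..n}"
    have c: "of_nat (Suc j) * ((N gchoose (Suc j)) * ((\<alpha> + of_nat (Suc n - Suc j)) gchoose (Suc n - Suc j)))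
       = N * (((\<alpha> + of_nat n + 2) gchoose j) * ((\<alpha> + of_nat (n - j)) gchoose (n - j)))"
      unfolding mult.assoc[symmetric] gI4 f by simp
    show "of_nat (Suc j) * ((N gchoose (Suc j)) * ((\<alpha> + of_nat (Suc n - Suc j)) gchoose (Suc n - Suc j))) * bern_poly j t * bern_poly (Suc n - 1 - j) 0
        = N * ((((\<alpha> + of_nat n + 2) gchoose j) * ((\<alpha> + of_nat (n - j)) gchoose (n - j))) * bern_poly j t * bern_poly (n - j) 0)"
      unfolding c diff_Suc_1 by (simp only: mult.assoc)
  qed simp
  show ?thesis unfolding V2_diag N_def[symmetric] using d[unfolded e] .
qed

lemma D2_dt: "((\<lambda>t. D2 (Suc n) \<alpha> t t) has_field_derivative (\<alpha> + of_nat (Suc n) + 2) * D2 n \<alpha> t t) (at t)"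
proof -
  have "((\<lambda>t. D2 (Suc n) \<alpha> t t) has_field_derivative
     (\<alpha> + of_nat (Suc n) + 2) * L2 n \<alpha> t t - ((\<alpha> + 1) * ((\<alpha> + of_nat (Suc n) + 2) * U2 n \<alpha> t t) + (\<alpha> + of_nat (Suc n) + 2) * V2 n \<alpha> t t)) (at t)"
    unfolding D2_def by (intro DERIV_diff DERIV_add DERIV_cmult L2_dt U2_dt V2_dt)
  then show ?thesis by (rule DERIV_cong) (simp add: D2_def algebra_simps)
qed

lemma bern_poly_1': "bern_poly k 1 = bern_poly k 0 + (if k = 1 then 1 else 0)"
  by (simp add: bern_poly_1 bern_poly_0)

lemma D2_delta:
  assumes m: "m \<ge> 2"
  shows "D2 m \<alpha> 1 1 = D2 m \<alpha> 0 0"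
proof -
  define b where "b k = bern_poly k 0" for k
  define N where "N = \<alpha> + of_nat m + 2"
  have B1: "bern_poly k 1 = b k + (if k = 1 then 1 else 0)" for k unfolding b_def by (rule bern_poly_1')
  have U: "U2 m \<alpha> 1 1 - U2 m \<alpha> 0 0 = N * (-1)^(m-1) * b (m-1)"
  proof -
    have "U2 m \<alpha> 1 1 - U2 m \<alpha> 0 0 = (\<Sum>k\<le>m. if k = 1 then (N gchoose k) * (-1)^(m-k) * b (m-k) else 0)"
      unfolding U2_def sum_subtractf[symmetric] N_def[symmetric]
      by (rule sum.cong) (auto simp: B1 b_def algebra_simps)
    also have "\<dots> = N * (-1)^(m-1) * b (m-1)" using m by (simp add: sum.delta)
    finally show ?thesis .
  qed
  have V: "V2 m \<alpha> 1 1 - V2 m \<alpha> 0 0 = N * ((\<alpha> + of_nat (m-1)) gchoose (m-1)) * b (m-1)"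
  proof -
    have "V2 m \<alpha> 1 1 - V2 m \<alpha> 0 0 = (\<Sum>k\<le>m. if k = 1 then (N gchoose k) * ((\<alpha> + of_nat (m - k)) gchoose (m - k)) * b (m-k) else 0)"
      unfolding V2_def sum_subtractf[symmetric] N_def[symmetric]
      by (rule sum.cong) (auto simp: B1 b_def algebra_simps)
    also have "\<dots> = N * ((\<alpha> + of_nat (m-1)) gchoose (m-1)) * b (m-1)" using m by (simp add: sum.delta)
    finally show ?thesis .
  qed
  have L: "L2 m \<alpha> 1 1 - L2 m \<alpha> 0 0 = N * ((\<alpha> + 1) * b (m-1) + ((\<alpha> + of_nat (m-1)) gchoose (m-1)) * b (m-1)
        + (if m = 2 then \<alpha> + 1 else 0))"
  proof -
    have "L2 m \<alpha> 1 1 - L2 m \<alpha> 0 0 = N * (\<Sum>k\<le>m. ((\<alpha> + of_nat k) gchoose k) * (bern_poly k 1 * bern_poly (m-k) 1 - b k * b (m - k)))"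
      unfolding L2_def N_def[symmetric] b_def
      by (simp add: right_diff_distrib[symmetric] sum_subtractf[symmetric] algebra_simps)
    also have "(\<Sum>k\<le>m. ((\<alpha> + of_nat k) gchoose k) * (bern_poly k 1 * bern_poly (m-k) 1 - b k * b (m - k)))
       = (\<Sum>k\<le>m. (if k = 1 then ((\<alpha> + of_nat k) gchoose k) * b (m - k) else 0)
              + (if k = m - 1 then ((\<alpha> + of_nat k) gchoose k) * b k else 0)
              + (if k = 1 \<and> k = m - 1 then ((\<alpha> + of_nat k) gchoose k) else 0))"
    proof (rule sum.cong)
      fix k assume k: "k \<in> {..m}"
      have e: "(m - k = 1) = (k = m - 1)" using k m by auto
      show "((\<alpha> + of_nat k) gchoose k) * (bern_poly k 1 * bern_poly (m-k) 1 - b k * b (m - k))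
         = (if k = 1 then ((\<alpha> + of_nat k) gchoose k) * b (m - k) else 0)
              + (if k = m - 1 then ((\<alpha> + of_nat k) gchoose k) * b k else 0)
              + (if k = 1 \<and> k = m - 1 then ((\<alpha> + of_nat k) gchoose k) else 0)"
        unfolding B1 e by (auto simp: algebra_simps)
    qed simp
    also have "\<dots> = (\<alpha> + 1) * b (m-1) + ((\<alpha> + of_nat (m-1)) gchoose (m-1)) * b (m-1) + (if m = 2 then \<alpha> + 1 else 0)"
    proof -
      have "(\<Sum>k\<le>m. (if k = 1 \<and> k = m - 1 then ((\<alpha> + of_nat k) gchoose k) else 0))
          = (\<Sum>k\<le>m. (if k = 1 then (if m = 2 then ((\<alpha> + of_nat k) gchoose k) else 0) else 0))"
        by (rule sum.cong) (use m in auto)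
      then show ?thesis using m by (simp add: sum.distrib sum.delta)
    qed
    finally show ?thesis .
  qed
  have R: "(-1)^(m-1) * b (m-1) = b (m-1) + (if m = 2 then 1 else 0)"
    using bern_refl[of "m-1"] m unfolding b_def bern_poly_0 by auto
  have "D2 m \<alpha> 1 1 - D2 m \<alpha> 0 0 = (L2 m \<alpha> 1 1 - L2 m \<alpha> 0 0) - ((\<alpha> + 1) * (U2 m \<alpha> 1 1 - U2 m \<alpha> 0 0) + (V2 m \<alpha> 1 1 - V2 m \<alpha> 0 0))"
    unfolding D2_def by (simp add: algebra_simps)
  also have "\<dots> = N * (\<alpha> + 1) * (b (m-1) + (if m = 2 then 1 else 0) - (-1)^(m-1) * b (m-1))"
    unfolding L U V by (simp add: algebra_simps)
  also have "\<dots> = 0" unfolding R by simp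
  finally show ?thesis by simp
qed


lemma zero_deriv_const:
  fixes f :: "complex \<Rightarrow> complex"
  assumes "\<And>x. (f has_field_derivative 0) (at x)"
  shows "f x = f y"
proof -
  obtain c where "\<forall>x\<in>UNIV. f x = c"
    using has_field_derivative_zero_constant[of UNIV f] assms by auto
  then show ?thesis by simp
qed

lemma const_deriv_diff:
  fixes g :: "complex \<Rightarrow> complex"
  assumes "\<And>t. (g has_field_derivative K) (at t)"
  shows "g 1 - g 0 = K"
proof -
  have "(\<lambda>t. g t - K * t) 1 = (\<lambda>t. g t - K * t) 0"
  proof (rule zero_deriv_const[where f = "\<lambda>t. g t - K * t"])
    fix x
    have "((\<lambda>t. g t - K * t) has_field_derivative K - K * 1) (at x)"
      by (intro DERIV_diff assms DERIV_cmult DERIV_ident)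
    then show "((\<lambda>t. g t - K * t) has_field_derivative 0) (at x)" by simp
  qed
  then show ?thesis by (simp add: algebra_simps)
qed

lemma continuous_on_gchoose [continuous_intros]:
  fixes f :: "complex \<Rightarrow> complex"
  assumes "continuous_on S f"
  shows "continuous_on S (\<lambda>x. (f x) gchoose k)"
proof -
  have e: "(\<lambda>x. (f x) gchoose k) = (\<lambda>x. (\<Prod>i=0..<k. f x - of_nat i) / fact k)"
    by (simp add: gbinomial_prod_rev)
  show ?thesis unfolding e by (intro continuous_intros assms) auto
qed

lemma cont_zero:
  fixes c :: "complex \<Rightarrow> complex"
  assumes "continuous_on UNIV c" and "\<And>z. z \<noteq> a \<Longrightarrow> c z = 0"
  shows "c a = 0"
proof -
  have "(c \<longlongrightarrow> c a) (at a)"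
    using assms(1) by (simp add: continuous_on_eq_continuous_at isCont_def)
  moreover have "(c \<longlongrightarrow> 0) (at a)"
  proof (rule tendsto_eventually)
    show "\<forall>\<^sub>F z in at a. c z = 0" using assms(2) by (auto simp: eventually_at_filter)
  qed
  ultimately show ?thesis using tendsto_unique[OF at_neq_bot] by blast
qed

lemma D2_cont: "continuous_on UNIV (\<lambda>\<alpha>. D2 n \<alpha> x y)"
  unfolding D2_def L2_def U2_def V2_def by (intro continuous_intros)

lemma D2_zero: "D2 n \<alpha> x y = 0"
proof (induction n arbitrary: \<alpha> x y)
  case 0
  then show ?case by (simp add: D2_def L2_def U2_def V2_def)
next
  case (Suc n)
  have a: "D2 (Suc n) \<beta> x y = D2 (Suc n) \<beta> y y" for \<beta> x y
  proof (rule zero_deriv_const[where f = "\<lambda>x. D2 (Suc n) \<beta> x y"])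
    fix x show "((\<lambda>x. D2 (Suc n) \<beta> x y) has_field_derivative 0) (at x)"
      using D2_dx[of n \<beta> y x] Suc.IH by simp
  qed
  have b: "D2 (Suc n) \<beta> t t = D2 (Suc n) \<beta> 0 0" for \<beta> t
  proof (rule zero_deriv_const[where f = "\<lambda>t. D2 (Suc n) \<beta> t t"])
    fix x show "((\<lambda>t. D2 (Suc n) \<beta> t t) has_field_derivative 0) (at x)"
      using D2_dt[of n \<beta> x] Suc.IH by simp
  qed
  have c: "(\<beta> + of_nat (Suc (Suc n)) + 2) * D2 (Suc n) \<beta> 0 0 = 0" for \<beta>
  proof -
    have "D2 (Suc (Suc n)) \<beta> 1 1 - D2 (Suc (Suc n)) \<beta> 0 0 = (\<beta> + of_nat (Suc (Suc n)) + 2) * D2 (Suc n) \<beta> 0 0"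
    proof (rule const_deriv_diff[where g = "\<lambda>t. D2 (Suc (Suc n)) \<beta> t t"])
      fix t show "((\<lambda>t. D2 (Suc (Suc n)) \<beta> t t) has_field_derivative (\<beta> + of_nat (Suc (Suc n)) + 2) * D2 (Suc n) \<beta> 0 0) (at t)"
        using D2_dt[of "Suc n" \<beta> t] b[of \<beta> t] by simp
    qed
    then show ?thesis using D2_delta[of "Suc (Suc n)" \<beta>] by simp
  qed
  define p :: complex where "p = - (of_nat (Suc (Suc n)) + 2)"
  have z0: "D2 (Suc n) z 0 0 = 0" if zp: "z \<noteq> p" for z
  proof -
    have "z + of_nat (Suc (Suc n)) + 2 \<noteq> 0"
    proof (intro notI)
      assume h: "z + of_nat (Suc (Suc n)) + 2 = 0"
      have "z = (z + of_nat (Suc (Suc n)) + 2) - (of_nat (Suc (Suc n)) + 2)" by (simp add: algebra_simps)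
      then have "z = p" unfolding h p_def by simp
      then show False using zp by simp
    qed
    with c[of z] show "D2 (Suc n) z 0 0 = 0" by simp
  qed
  have zp: "D2 (Suc n) p 0 0 = 0"
    by (rule cont_zero[where c = "\<lambda>\<beta>. D2 (Suc n) \<beta> 0 0", OF D2_cont z0])
  have z: "D2 (Suc n) \<beta> 0 0 = 0" for \<beta>
    using z0 zp by (cases "\<beta> = p") auto
  have "D2 (Suc n) \<alpha> x y = D2 (Suc n) \<alpha> y y" by (rule a)
  also have "\<dots> = D2 (Suc n) \<alpha> 0 0" by (rule b)
  also have "\<dots> = 0" by (rule z)
  finally show ?case .
qed

definition L1 :: "nat \<Rightarrow> complex \<Rightarrow> complex \<Rightarrow> complex \<Rightarrow> complex" where
  "L1 n \<alpha> x y = (\<alpha> + of_nat n + 1) / 2 * (\<Sum>k<n. ((\<alpha> + of_nat k) gchoose k) * euler_poly k x * euler_poly (n - 1 - k) y)"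
definition U1 :: "nat \<Rightarrow> complex \<Rightarrow> complex \<Rightarrow> complex \<Rightarrow> complex" where
  "U1 n \<alpha> x y = (\<Sum>k\<le>n. ((\<alpha> + of_nat n + 1) gchoose k) * (-1) ^ (n - k) * bern_poly k x * euler_poly (n - k) (x - y))"
definition V1 :: "nat \<Rightarrow> complex \<Rightarrow> complex \<Rightarrow> complex \<Rightarrow> complex" where
  "V1 n \<alpha> x y = (\<Sum>k\<le>n. ((\<alpha> + of_nat n + 1) gchoose k) * ((\<alpha> + of_nat (n - k)) gchoose (n - k)) * bern_poly k y * euler_poly (n - k) (x - y))"
definition D1 :: "nat \<Rightarrow> complex \<Rightarrow> complex \<Rightarrow> complex \<Rightarrow> complex" where
  "D1 n \<alpha> x y = L1 n \<alpha> x y - (U1 n \<alpha> x y - V1 n \<alpha> x y)"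

lemma L1_Suc: "L1 (Suc n) \<alpha> x y = (\<alpha> + of_nat (Suc n) + 1) / 2 * (\<Sum>k\<le>n. ((\<alpha> + of_nat k) gchoose k) * euler_poly k x * euler_poly (n - k) y)"
  unfolding L1_def lessThan_Suc_atMost by simp

lemma L1_dx: "((\<lambda>x. L1 (Suc n) \<alpha> x y) has_field_derivative (\<alpha> + 1) * L1 n (\<alpha> + 1) x y) (at x)"
proof -
  have d: "((\<lambda>s. \<Sum>k\<le>n. ((\<alpha> + of_nat k) gchoose k) * euler_poly k s * euler_poly (n - k) y) has_field_derivative
      (\<Sum>j<n. of_nat (Suc j) * ((\<alpha> + of_nat (Suc j)) gchoose (Suc j)) * euler_poly j x * euler_poly (n - 1 - j) y)) (at x)"
    by (rule conv_deriv1[where P = euler_poly and R = "\<lambda>k. euler_poly k y"], rule euler_poly_deriv)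
  have e: "(\<Sum>j<n. of_nat (Suc j) * ((\<alpha> + of_nat (Suc j)) gchoose (Suc j)) * euler_poly j x * euler_poly (n - 1 - j) y)
      = (\<alpha> + 1) * (\<Sum>k<n. ((\<alpha> + 1 + of_nat k) gchoose k) * euler_poly k x * euler_poly (n - 1 - k) y)"
    unfolding sum_distrib_left
    by (rule sum.cong) (simp, simp only: gI1 mult.assoc)
  have f: "\<alpha> + of_nat (Suc n) + 1 = \<alpha> + 1 + of_nat n + 1" by simp
  show ?thesis unfolding L1_Suc unfolding L1_def f
    by (rule DERIV_cong[OF DERIV_cmult[OF d[unfolded e], of "(\<alpha> + 1 + of_nat n + 1) / 2"]])
       (simp only: mult_ac times_divide_eq_left times_divide_eq_right)
qed

lemma U1_dx: "((\<lambda>x. U1 (Suc n) \<alpha> x y) has_field_derivative (\<alpha> + 1) * U1 n (\<alpha> + 1) x y) (at x)"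
proof -
  define N where "N = \<alpha> + of_nat (Suc n) + 1"
  have d: "((\<lambda>s. \<Sum>k\<le>Suc n. ((N gchoose k) * (-1) ^ (Suc n - k)) * bern_poly k s * euler_poly (Suc n - k) (s - y)) has_field_derivative
      (\<Sum>j<Suc n. (of_nat (Suc j) * ((N gchoose (Suc j)) * (-1) ^ (Suc n - Suc j)) + of_nat (Suc n - j) * ((N gchoose j) * (-1) ^ (Suc n - j)))
          * bern_poly j x * euler_poly (Suc n - 1 - j) (x - y))) (at x)"
    by (rule conv_deriv[where P = bern_poly and Q = "\<lambda>k s. euler_poly k (s - y)"], rule bern_poly_deriv, rule euler_shift_deriv)
  have e: "(\<Sum>j<Suc n. (of_nat (Suc j) * ((N gchoose (Suc j)) * (-1) ^ (Suc n - Suc j)) + of_nat (Suc n - j) * ((N gchoose j) * (-1) ^ (Suc n - j)))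
          * bern_poly j x * euler_poly (Suc n - 1 - j) (x - y))
      = (\<alpha> + 1) * (\<Sum>k\<le>n. (N gchoose k) * (-1) ^ (n - k) * bern_poly k x * euler_poly (n - k) (x - y))"
    unfolding lessThan_Suc_atMost sum_distrib_left
  proof (rule sum.cong)
    fix j assume j: "j \<in> {..n}"
    have s1: "(-1::complex) ^ (Suc n - j) = - ((-1) ^ (n - j))" using j by (simp add: Suc_diff_le)
    have s2: "of_nat (Suc n - j) = (of_nat n + 1 - of_nat j :: complex)" using j by (simp add: Suc_diff_le of_nat_diff)
    have F: "of_nat (Suc j) * (N gchoose (Suc j)) + - (of_nat (Suc n - j) * (N gchoose j)) = (\<alpha> + 1) * (N gchoose j)"
      unfolding gI2 s2 N_def by (simp add: algebra_simps)
    have G: "of_nat (Suc j) * ((N gchoose (Suc j)) * (-1) ^ (n - j)) + of_nat (Suc n - j) * ((N gchoose j) * - ((-1) ^ (n - j)))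
       = (\<alpha> + 1) * ((N gchoose j) * (-1) ^ (n - j))"
    proof -
      have "of_nat (Suc j) * ((N gchoose (Suc j)) * (-1) ^ (n - j)) + of_nat (Suc n - j) * ((N gchoose j) * - ((-1) ^ (n - j)))
          = (of_nat (Suc j) * (N gchoose (Suc j)) + - (of_nat (Suc n - j) * (N gchoose j))) * (-1) ^ (n - j)"
        by (simp add: algebra_simps)
      also have "\<dots> = (\<alpha> + 1) * ((N gchoose j) * (-1) ^ (n - j))" unfolding F by (simp add: mult.assoc)
      finally show ?thesis .
    qed
    show "(of_nat (Suc j) * ((N gchoose (Suc j)) * (-1) ^ (Suc n - Suc j)) + of_nat (Suc n - j) * ((N gchoose j) * (-1) ^ (Suc n - j)))
          * bern_poly j x * euler_poly (Suc n - 1 - j) (x - y)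
        = (\<alpha> + 1) * ((N gchoose j) * (-1) ^ (n - j) * bern_poly j x * euler_poly (n - j) (x - y))"
      by (simp only: s1 diff_Suc_Suc diff_Suc_1 G mult.assoc)
  qed simp
  have f: "N = \<alpha> + 1 + of_nat n + 1" unfolding N_def by simp
  show ?thesis unfolding U1_def N_def[symmetric] f[symmetric]
    by (rule d[unfolded e])
qed

lemma V1_dx: "((\<lambda>x. V1 (Suc n) \<alpha> x y) has_field_derivative (\<alpha> + 1) * V1 n (\<alpha> + 1) x y) (at x)"
proof -
  define N where "N = \<alpha> + of_nat (Suc n) + 1"
  have d: "((\<lambda>s. \<Sum>k\<le>Suc n. ((N gchoose k) * ((\<alpha> + of_nat (Suc n - k)) gchoose (Suc n - k))) * bern_poly k y * euler_poly (Suc n - k) (s - y)) has_field_derivative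
      (\<Sum>j<Suc n. of_nat (Suc n - j) * ((N gchoose j) * ((\<alpha> + of_nat (Suc n - j)) gchoose (Suc n - j))) * bern_poly j y * euler_poly (Suc n - 1 - j) (x - y))) (at x)"
    by (rule conv_deriv2[where R = "\<lambda>k. bern_poly k y" and Q = "\<lambda>k s. euler_poly k (s - y)"], rule euler_shift_deriv)
  have e: "(\<Sum>j<Suc n. of_nat (Suc n - j) * ((N gchoose j) * ((\<alpha> + of_nat (Suc n - j)) gchoose (Suc n - j))) * bern_poly j y * euler_poly (Suc n - 1 - j) (x - y))
      = (\<alpha> + 1) * (\<Sum>k\<le>n. (N gchoose k) * ((\<alpha> + 1 + of_nat (n - k)) gchoose (n - k)) * bern_poly k y * euler_poly (n - k) (x - y))"
    unfolding lessThan_Suc_atMost sum_distrib_left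
  proof (rule sum.cong)
    fix j assume j: "j \<in> {..n}"
    have sd: "Suc n - j = Suc (n - j)" using j by (simp add: Suc_diff_le)
    have "of_nat (Suc n - j) * ((N gchoose j) * ((\<alpha> + of_nat (Suc n - j)) gchoose (Suc n - j)))
        = (N gchoose j) * (of_nat (Suc (n - j)) * ((\<alpha> + of_nat (Suc (n - j))) gchoose (Suc (n - j))))"
      unfolding sd by (simp only: mult_ac)
    also have "\<dots> = (\<alpha> + 1) * ((N gchoose j) * ((\<alpha> + 1 + of_nat (n - j)) gchoose (n - j)))"
      unfolding gI1 by (simp only: mult_ac)
    finally have c: "of_nat (Suc n - j) * ((N gchoose j) * ((\<alpha> + of_nat (Suc n - j)) gchoose (Suc n - j)))
        = (\<alpha> + 1) * ((N gchoose j) * ((\<alpha> + 1 + of_nat (n - j)) gchoose (n - j)))" .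
    show "of_nat (Suc n - j) * ((N gchoose j) * ((\<alpha> + of_nat (Suc n - j)) gchoose (Suc n - j))) * bern_poly j y * euler_poly (Suc n - 1 - j) (x - y)
        = (\<alpha> + 1) * ((N gchoose j) * ((\<alpha> + 1 + of_nat (n - j)) gchoose (n - j)) * bern_poly j y * euler_poly (n - j) (x - y))"
      unfolding c diff_Suc_1 by (simp only: mult.assoc)
  qed simp
  have f: "N = \<alpha> + 1 + of_nat n + 1" unfolding N_def by simp
  show ?thesis unfolding V1_def N_def[symmetric] f[symmetric]
    by (rule d[unfolded e])
qed

lemma D1_dx: "((\<lambda>x. D1 (Suc n) \<alpha> x y) has_field_derivative (\<alpha> + 1) * D1 n (\<alpha> + 1) x y) (at x)"
proof -
  have "((\<lambda>x. D1 (Suc n) \<alpha> x y) has_field_derivative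
     (\<alpha> + 1) * L1 n (\<alpha> + 1) x y - ((\<alpha> + 1) * U1 n (\<alpha> + 1) x y - (\<alpha> + 1) * V1 n (\<alpha> + 1) x y)) (at x)"
    unfolding D1_def by (intro DERIV_diff L1_dx U1_dx V1_dx)
  then show ?thesis by (rule DERIV_cong) (simp add: D1_def algebra_simps)
qed

lemma L1_dt: "((\<lambda>t. L1 (Suc n) \<alpha> t t) has_field_derivative (\<alpha> + of_nat (Suc n) + 1) * L1 n \<alpha> t t) (at t)"
proof -
  have d: "((\<lambda>s. \<Sum>k\<le>n. ((\<alpha> + of_nat k) gchoose k) * euler_poly k s * euler_poly (n - k) s) has_field_derivative
      (\<Sum>j<n. (of_nat (Suc j) * ((\<alpha> + of_nat (Suc j)) gchoose (Suc j)) + of_nat (n - j) * ((\<alpha> + of_nat j) gchoose j))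
         * euler_poly j t * euler_poly (n - 1 - j) t)) (at t)"
    by (rule conv_deriv[where P = euler_poly and Q = euler_poly], rule euler_poly_deriv, rule euler_poly_deriv)
  have e: "(\<Sum>j<n. (of_nat (Suc j) * ((\<alpha> + of_nat (Suc j)) gchoose (Suc j)) + of_nat (n - j) * ((\<alpha> + of_nat j) gchoose j))
         * euler_poly j t * euler_poly (n - 1 - j) t)
      = (\<alpha> + of_nat n + 1) * (\<Sum>k<n. ((\<alpha> + of_nat k) gchoose k) * euler_poly k t * euler_poly (n - 1 - k) t)"
    unfolding sum_distrib_left
  proof (rule sum.cong)
    fix j assume j: "j \<in> {..<n}"
    have s2: "of_nat (n - j) = (of_nat n - of_nat j :: complex)" using j by (simp add: of_nat_diff)
    have c: "of_nat (Suc j) * ((\<alpha> + of_nat (Suc j)) gchoose (Suc j)) + of_nat (n - j) * ((\<alpha> + of_nat j) gchoose j)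
        = (\<alpha> + of_nat n + 1) * ((\<alpha> + of_nat j) gchoose j)"
      unfolding gI3 s2 by (simp add: algebra_simps)
    show "(of_nat (Suc j) * ((\<alpha> + of_nat (Suc j)) gchoose (Suc j)) + of_nat (n - j) * ((\<alpha> + of_nat j) gchoose j))
         * euler_poly j t * euler_poly (n - 1 - j) t
        = (\<alpha> + of_nat n + 1) * (((\<alpha> + of_nat j) gchoose j) * euler_poly j t * euler_poly (n - 1 - j) t)"
      unfolding c by (simp only: mult.assoc)
  qed simp
  show ?thesis unfolding L1_Suc unfolding L1_def
    by (rule DERIV_cong[OF DERIV_cmult[OF d[unfolded e], of "(\<alpha> + of_nat (Suc n) + 1) / 2"]])
       (simp only: mult_ac times_divide_eq_left times_divide_eq_right)
qed

lemma U1_diag: "U1 m \<alpha> t t = (\<Sum>k\<le>m. (((\<alpha> + of_nat m + 1) gchoose k) * (-1) ^ (m - k)) * bern_poly k t * euler_poly (m - k) 0)"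
  unfolding U1_def by simp

lemma V1_diag: "V1 m \<alpha> t t = (\<Sum>k\<le>m. (((\<alpha> + of_nat m + 1) gchoose k) * ((\<alpha> + of_nat (m - k)) gchoose (m - k))) * bern_poly k t * euler_poly (m - k) 0)"
  unfolding V1_def by simp

lemma U1_dt: "((\<lambda>t. U1 (Suc n) \<alpha> t t) has_field_derivative (\<alpha> + of_nat (Suc n) + 1) * U1 n \<alpha> t t) (at t)"
proof -
  define N where "N = \<alpha> + of_nat (Suc n) + 1"
  have d: "((\<lambda>s. \<Sum>k\<le>Suc n. ((N gchoose k) * (-1) ^ (Suc n - k)) * bern_poly k s * euler_poly (Suc n - k) 0) has_field_derivative
      (\<Sum>j<Suc n. of_nat (Suc j) * ((N gchoose (Suc j)) * (-1) ^ (Suc n - Suc j)) * bern_poly j t * euler_poly (Suc n - 1 - j) 0)) (at t)"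
    by (rule conv_deriv1[where P = bern_poly and R = "\<lambda>k. euler_poly k 0"], rule bern_poly_deriv)
  have f: "N - 1 = \<alpha> + of_nat n + 1" unfolding N_def by simp
  have e: "(\<Sum>j<Suc n. of_nat (Suc j) * ((N gchoose (Suc j)) * (-1) ^ (Suc n - Suc j)) * bern_poly j t * euler_poly (Suc n - 1 - j) 0)
      = N * (\<Sum>k\<le>n. (((\<alpha> + of_nat n + 1) gchoose k) * (-1) ^ (n - k)) * bern_poly k t * euler_poly (n - k) 0)"
    unfolding lessThan_Suc_atMost sum_distrib_left
  proof (rule sum.cong)
    fix j assume j: "j \<in> {..n}"
    have c: "of_nat (Suc j) * ((N gchoose (Suc j)) * (-1) ^ (Suc n - Suc j)) = N * (((\<alpha> + of_nat n + 1) gchoose j) * (-1) ^ (n - j))"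
      unfolding mult.assoc[symmetric] gI4 f by simp
    show "of_nat (Suc j) * ((N gchoose (Suc j)) * (-1) ^ (Suc n - Suc j)) * bern_poly j t * euler_poly (Suc n - 1 - j) 0
        = N * ((((\<alpha> + of_nat n + 1) gchoose j) * (-1) ^ (n - j)) * bern_poly j t * euler_poly (n - j) 0)"
      unfolding c diff_Suc_1 by (simp only: mult.assoc)
  qed simp
  show ?thesis unfolding U1_diag N_def[symmetric] using d[unfolded e] .
qed

lemma V1_dt: "((\<lambda>t. V1 (Suc n) \<alpha> t t) has_field_derivative (\<alpha> + of_nat (Suc n) + 1) * V1 n \<alpha> t t) (at t)"
proof -
  define N where "N = \<alpha> + of_nat (Suc n) + 1"
  have d: "((\<lambda>s. \<Sum>k\<le>Suc n. ((N gchoose k) * ((\<alpha> + of_nat (Suc n - k)) gchoose (Suc n - k))) * bern_poly k s * euler_poly (Suc n - k) 0) has_field_derivative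
      (\<Sum>j<Suc n. of_nat (Suc j) * ((N gchoose (Suc j)) * ((\<alpha> + of_nat (Suc n - Suc j)) gchoose (Suc n - Suc j))) * bern_poly j t * euler_poly (Suc n - 1 - j) 0)) (at t)"
    by (rule conv_deriv1[where P = bern_poly and R = "\<lambda>k. euler_poly k 0"], rule bern_poly_deriv)
  have f: "N - 1 = \<alpha> + of_nat n + 1" unfolding N_def by simp
  have e: "(\<Sum>j<Suc n. of_nat (Suc j) * ((N gchoose (Suc j)) * ((\<alpha> + of_nat (Suc n - Suc j)) gchoose (Suc n - Suc j))) * bern_poly j t * euler_poly (Suc n - 1 - j) 0)
      = N * (\<Sum>k\<le>n. (((\<alpha> + of_nat n + 1) gchoose k) * ((\<alpha> + of_nat (n - k)) gchoose (n - k))) * bern_poly k t * euler_poly (n - k) 0)"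
    unfolding lessThan_Suc_atMost sum_distrib_left
  proof (rule sum.cong)
    fix j assume j: "j \<in> {..n}"
    have c: "of_nat (Suc j) * ((N gchoose (Suc j)) * ((\<alpha> + of_nat (Suc n - Suc j)) gchoose (Suc n - Suc j)))
       = N * (((\<alpha> + of_nat n + 1) gchoose j) * ((\<alpha> + of_nat (n - j)) gchoose (n - j)))"
      unfolding mult.assoc[symmetric] gI4 f by simp
    show "of_nat (Suc j) * ((N gchoose (Suc j)) * ((\<alpha> + of_nat (Suc n - Suc j)) gchoose (Suc n - Suc j))) * bern_poly j t * euler_poly (Suc n - 1 - j) 0
        = N * ((((\<alpha> + of_nat n + 1) gchoose j) * ((\<alpha> + of_nat (n - j)) gchoose (n - j))) * bern_poly j t * euler_poly (n - j) 0)"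
      unfolding c diff_Suc_1 by (simp only: mult.assoc)
  qed simp
  show ?thesis unfolding V1_diag N_def[symmetric] using d[unfolded e] .
qed

lemma D1_dt: "((\<lambda>t. D1 (Suc n) \<alpha> t t) has_field_derivative (\<alpha> + of_nat (Suc n) + 1) * D1 n \<alpha> t t) (at t)"
proof -
  have "((\<lambda>t. D1 (Suc n) \<alpha> t t) has_field_derivative
     (\<alpha> + of_nat (Suc n) + 1) * L1 n \<alpha> t t - ((\<alpha> + of_nat (Suc n) + 1) * U1 n \<alpha> t t - (\<alpha> + of_nat (Suc n) + 1) * V1 n \<alpha> t t)) (at t)"
    unfolding D1_def by (intro DERIV_diff L1_dt U1_dt V1_dt)
  then show ?thesis by (rule DERIV_cong) (simp add: D1_def algebra_simps)
qed


lemma euler_poly_1': "euler_poly k 1 = (if k = 0 then 2 else 0) - euler_poly k 0"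
proof (cases "k = 0")
  case False
  then have "euler_poly k 0 + euler_poly k 1 = 0" by (intro euler_poly_sum01) simp
  then show ?thesis using False by (simp add: eq_neg_iff_add_eq_0 add.commute)
qed simp

lemma D1_delta:
  assumes m: "m \<ge> 2"
  shows "D1 m \<alpha> 1 1 = D1 m \<alpha> 0 0"
proof -
  define e where "e k = euler_poly k 0" for k
  define M where "M = \<alpha> + of_nat m + 1"
  have B1: "bern_poly k 1 = bern_poly k 0 + (if k = 1 then 1 else 0)" for k by (rule bern_poly_1')
  have E1: "euler_poly k 1 = (if k = 0 then 2 else 0) - e k" for k unfolding e_def by (rule euler_poly_1')
  have U: "U1 m \<alpha> 1 1 - U1 m \<alpha> 0 0 = M * (-1)^(m-1) * e (m-1)"
  proof -
    have "U1 m \<alpha> 1 1 - U1 m \<alpha> 0 0 = (\<Sum>k\<le>m. if k = 1 then (M gchoose k) * (-1)^(m-k) * e (m-k) else 0)"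
      unfolding U1_def sum_subtractf[symmetric] M_def[symmetric]
      by (rule sum.cong) (auto simp: B1 e_def algebra_simps)
    also have "\<dots> = M * (-1)^(m-1) * e (m-1)" using m by (simp add: sum.delta)
    finally show ?thesis .
  qed
  have V: "V1 m \<alpha> 1 1 - V1 m \<alpha> 0 0 = M * ((\<alpha> + of_nat (m-1)) gchoose (m-1)) * e (m-1)"
  proof -
    have "V1 m \<alpha> 1 1 - V1 m \<alpha> 0 0 = (\<Sum>k\<le>m. if k = 1 then (M gchoose k) * ((\<alpha> + of_nat (m - k)) gchoose (m - k)) * e (m-k) else 0)"
      unfolding V1_def sum_subtractf[symmetric] M_def[symmetric]
      by (rule sum.cong) (auto simp: B1 e_def algebra_simps)
    also have "\<dots> = M * ((\<alpha> + of_nat (m-1)) gchoose (m-1)) * e (m-1)" using m by (simp add: sum.delta)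
    finally show ?thesis .
  qed
  have L: "L1 m \<alpha> 1 1 - L1 m \<alpha> 0 0 = - M * (1 + ((\<alpha> + of_nat (m-1)) gchoose (m-1))) * e (m-1)"
  proof -
    have "L1 m \<alpha> 1 1 - L1 m \<alpha> 0 0 = M / 2 * (\<Sum>k<m. ((\<alpha> + of_nat k) gchoose k) * (euler_poly k 1 * euler_poly (m - 1 - k) 1 - e k * e (m - 1 - k)))"
      unfolding L1_def M_def[symmetric] e_def
      by (simp add: right_diff_distrib[symmetric] sum_subtractf[symmetric] algebra_simps)
    also have "(\<Sum>k<m. ((\<alpha> + of_nat k) gchoose k) * (euler_poly k 1 * euler_poly (m - 1 - k) 1 - e k * e (m - 1 - k)))
       = (\<Sum>k<m. (if k = 0 then - 2 * ((\<alpha> + of_nat k) gchoose k) * e (m - 1 - k) else 0)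
              + (if k = m - 1 then - 2 * ((\<alpha> + of_nat k) gchoose k) * e k else 0))"
    proof (rule sum.cong)
      fix k assume k: "k \<in> {..<m}"
      have e: "(m - 1 - k = 0) = (k = m - 1)" using k m by auto
      have nz: "\<not> (k = 0 \<and> k = m - 1)" using m by auto
      show "((\<alpha> + of_nat k) gchoose k) * (euler_poly k 1 * euler_poly (m - 1 - k) 1 - e k * e (m - 1 - k))
         = (if k = 0 then - 2 * ((\<alpha> + of_nat k) gchoose k) * e (m - 1 - k) else 0)
              + (if k = m - 1 then - 2 * ((\<alpha> + of_nat k) gchoose k) * e k else 0)"
        unfolding E1 e using nz by (auto simp: algebra_simps)
    qed simp
    also have "\<dots> = - 2 * e (m - 1) - 2 * ((\<alpha> + of_nat (m-1)) gchoose (m-1)) * e (m-1)"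
      using m by (simp add: sum.distrib sum.delta)
    finally show ?thesis by (simp add: algebra_simps)
  qed
  have R: "(1 + (-1)^(m-1)) * e (m-1) = 0"
    unfolding e_def using m by (intro euler_poly_even0) simp
  have "D1 m \<alpha> 1 1 - D1 m \<alpha> 0 0 = (L1 m \<alpha> 1 1 - L1 m \<alpha> 0 0) - ((U1 m \<alpha> 1 1 - U1 m \<alpha> 0 0) - (V1 m \<alpha> 1 1 - V1 m \<alpha> 0 0))"
    unfolding D1_def by (simp add: algebra_simps)
  also have "\<dots> = - M * ((1 + (-1)^(m-1)) * e (m-1))"
    unfolding L U V by (simp add: algebra_simps)
  also have "\<dots> = 0" unfolding R by simp
  finally show ?thesis by simp
qed

lemma D1_cont: "continuous_on UNIV (\<lambda>\<alpha>. D1 n \<alpha> x y)"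
  unfolding D1_def L1_def U1_def V1_def by (intro continuous_intros) auto

lemma D1_zero: "D1 n \<alpha> x y = 0"
proof (induction n arbitrary: \<alpha> x y)
  case 0
  then show ?case by (simp add: D1_def L1_def U1_def V1_def)
next
  case (Suc n)
  have a: "D1 (Suc n) \<beta> x y = D1 (Suc n) \<beta> y y" for \<beta> x y
  proof (rule zero_deriv_const[where f = "\<lambda>x. D1 (Suc n) \<beta> x y"])
    fix x show "((\<lambda>x. D1 (Suc n) \<beta> x y) has_field_derivative 0) (at x)"
      using D1_dx[of n \<beta> y x] Suc.IH by simp
  qed
  have b: "D1 (Suc n) \<beta> t t = D1 (Suc n) \<beta> 0 0" for \<beta> t
  proof (rule zero_deriv_const[where f = "\<lambda>t. D1 (Suc n) \<beta> t t"])
    fix x show "((\<lambda>t. D1 (Suc n) \<beta> t t) has_field_derivative 0) (at x)"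
      using D1_dt[of n \<beta> x] Suc.IH by simp
  qed
  have c: "(\<beta> + of_nat (Suc (Suc n)) + 1) * D1 (Suc n) \<beta> 0 0 = 0" for \<beta>
  proof -
    have "D1 (Suc (Suc n)) \<beta> 1 1 - D1 (Suc (Suc n)) \<beta> 0 0 = (\<beta> + of_nat (Suc (Suc n)) + 1) * D1 (Suc n) \<beta> 0 0"
    proof (rule const_deriv_diff[where g = "\<lambda>t. D1 (Suc (Suc n)) \<beta> t t"])
      fix t show "((\<lambda>t. D1 (Suc (Suc n)) \<beta> t t) has_field_derivative (\<beta> + of_nat (Suc (Suc n)) + 1) * D1 (Suc n) \<beta> 0 0) (at t)"
        using D1_dt[of "Suc n" \<beta> t] b[of \<beta> t] by simp
    qed
    then show ?thesis using D1_delta[of "Suc (Suc n)" \<beta>] by simp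
  qed
  define p :: complex where "p = - (of_nat (Suc (Suc n)) + 1)"
  have z0: "D1 (Suc n) z 0 0 = 0" if zp: "z \<noteq> p" for z
  proof -
    have "z + of_nat (Suc (Suc n)) + 1 \<noteq> 0"
    proof (intro notI)
      assume h: "z + of_nat (Suc (Suc n)) + 1 = 0"
      have "z = (z + of_nat (Suc (Suc n)) + 1) - (of_nat (Suc (Suc n)) + 1)" by (simp add: algebra_simps)
      then have "z = p" unfolding h p_def by simp
      then show False using zp by simp
    qed
    with c[of z] show "D1 (Suc n) z 0 0 = 0" by simp
  qed
  have zp: "D1 (Suc n) p 0 0 = 0"
    by (rule cont_zero[where c = "\<lambda>\<beta>. D1 (Suc n) \<beta> 0 0", OF D1_cont z0])
  have z: "D1 (Suc n) \<beta> 0 0 = 0" for \<beta>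
    using z0 zp by (cases "\<beta> = p") auto
  have "D1 (Suc n) \<alpha> x y = D1 (Suc n) \<alpha> y y" by (rule a)
  also have "\<dots> = D1 (Suc n) \<alpha> 0 0" by (rule b)
  also have "\<dots> = 0" by (rule z)
  finally show ?case .
qed


theorem corollary1p1:
  fixes n :: nat and \<alpha> x y :: complex
  assumes "n > 0"
  shows "((\<alpha> + of_nat n + 1) / 2 *
           (\<Sum>k=0..n-1. ((\<alpha> + of_nat k) gchoose k) * euler_poly k x * euler_poly (n - 1 - k) y)
         = (\<Sum>k=0..n. ((\<alpha> + of_nat n + 1) gchoose k) *
              ((-1) ^ (n - k) * bern_poly k x - ((\<alpha> + of_nat (n - k)) gchoose (n - k)) * bern_poly k y)
              * euler_poly (n - k) (x - y))) \<and>
         ((\<alpha> + of_nat n + 2) *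
           (\<Sum>k=0..n. ((\<alpha> + of_nat k) gchoose k) * bern_poly k x * bern_poly (n - k) y)
         = (\<alpha> + 1) * (\<Sum>k=0..n. ((\<alpha> + of_nat n + 2) gchoose k) * (-1) ^ (n - k)
                                * bern_poly k x * bern_poly (n - k) (x - y))
           + (\<Sum>k=0..n. ((\<alpha> + of_nat n + 2) gchoose k) * ((\<alpha> + of_nat (n - k)) gchoose (n - k))
                                * bern_poly k y * bern_poly (n - k) (x - y)))"
proof
  have I: "{0..n-1} = {..<n}" using assms by auto
  have "(\<Sum>k=0..n. ((\<alpha> + of_nat n + 1) gchoose k) *
              ((-1) ^ (n - k) * bern_poly k x - ((\<alpha> + of_nat (n - k)) gchoose (n - k)) * bern_poly k y)
              * euler_poly (n - k) (x - y)) = U1 n \<alpha> x y - V1 n \<alpha> x y"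
    unfolding U1_def V1_def atLeast0AtMost sum_subtractf[symmetric]
    by (rule sum.cong) (simp_all add: algebra_simps)
  moreover have "L1 n \<alpha> x y = U1 n \<alpha> x y - V1 n \<alpha> x y"
    using D1_zero[of n \<alpha> x y] unfolding D1_def by simp
  ultimately show "(\<alpha> + of_nat n + 1) / 2 *
           (\<Sum>k=0..n-1. ((\<alpha> + of_nat k) gchoose k) * euler_poly k x * euler_poly (n - 1 - k) y)
         = (\<Sum>k=0..n. ((\<alpha> + of_nat n + 1) gchoose k) *
              ((-1) ^ (n - k) * bern_poly k x - ((\<alpha> + of_nat (n - k)) gchoose (n - k)) * bern_poly k y)
              * euler_poly (n - k) (x - y))"
    unfolding I L1_def by simp
next
  have "L2 n \<alpha> x y = (\<alpha> + 1) * U2 n \<alpha> x y + V2 n \<alpha> x y"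
    using D2_zero[of n \<alpha> x y] unfolding D2_def by simp
  then show "(\<alpha> + of_nat n + 2) *
           (\<Sum>k=0..n. ((\<alpha> + of_nat k) gchoose k) * bern_poly k x * bern_poly (n - k) y)
         = (\<alpha> + 1) * (\<Sum>k=0..n. ((\<alpha> + of_nat n + 2) gchoose k) * (-1) ^ (n - k)
                                * bern_poly k x * bern_poly (n - k) (x - y))
           + (\<Sum>k=0..n. ((\<alpha> + of_nat n + 2) gchoose k) * ((\<alpha> + of_nat (n - k)) gchoose (n - k))
                                * bern_poly k y * bern_poly (n - k) (x - y))"
    unfolding L2_def U2_def V2_def atLeast0AtMost .
qed

end
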